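(* Let $\kappa$ and $\lambda$ be uncountable cardinals. If there exists a $\kappa$-complete non-principal ultrafilter $\mathcal U$ on $\lambda$, then $\ell_\infty(\lambda)$ admits an equivalent norm for which it is $\mathrm{SQ}_{<\kappa}$.
   Context: A non-principal ultrafilter is $\kappa$-complete if it is closed under intersections of fewer than $\kappa$ of its members. A Banach space $Z$ is $\mathrm{SQ}_{<\kappa}$ if for every set $A\subset S_Z$ with $|A|<\kappa$ there exists $y\in S_Z$ with $\|x\pm y\|\le 1$ for all $x\in A$. *)

theory Defs
  imports "HOL-Analysis.Analysis"
begin

definition card_less :: "'a set \<Rightarrow> 'b set \<Rightarrow> bool" where
  "card_less A B \<longleftrightarrow> (card_of A, card_of B) \<in> ordLess"

definition is_ultrafilter :: "'i set set \<Rightarrow> bool" where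
  "is_ultrafilter U \<longleftrightarrow>
     UNIV \<in> U \<and> {} \<notin> U \<and>
     (\<forall>A B. A \<in> U \<and> A \<subseteq> B \<longrightarrow> B \<in> U) \<and>
     (\<forall>A B. A \<in> U \<and> B \<in> U \<longrightarrow> A \<inter> B \<in> U) \<and>
     (\<forall>A. A \<in> U \<or> - A \<in> U)"

definition non_principal :: "'i set set \<Rightarrow> bool" where
  "non_principal U \<longleftrightarrow> (\<forall>i. {i} \<notin> U)"

text \<open>kappa-complete: closed under intersections of fewer than kappa = |K| members.\<close>
definition kappa_complete :: "'k set \<Rightarrow> 'i set set \<Rightarrow> bool" where
  "kappa_complete K U \<longleftrightarrow>
     (\<forall>F. F \<subseteq> U \<and> F \<noteq> {} \<and> card_less F K \<longrightarrow> \<Inter>F \<in> U)"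

definition linf_space :: "('i \<Rightarrow> real) set" where
  "linf_space = {f. bounded (range f)}"

definition linf_norm :: "('i \<Rightarrow> real) \<Rightarrow> real" where
  "linf_norm f = (SUP i. \<bar>f i\<bar>)"

definition equivalent_norm :: "(('i \<Rightarrow> real) \<Rightarrow> real) \<Rightarrow> bool" where
  "equivalent_norm N \<longleftrightarrow>
     (\<forall>x\<in>linf_space. N x \<ge> 0 \<and> (N x = 0 \<longleftrightarrow> (\<forall>i. x i = 0))) \<and>
     (\<forall>x\<in>linf_space. \<forall>c::real. N (\<lambda>i. c * x i) = \<bar>c\<bar> * N x) \<and>
     (\<forall>x\<in>linf_space. \<forall>y\<in>linf_space. N (\<lambda>i. x i + y i) \<le> N x + N y) \<and>
     (\<exists>c C. 0 < c \<and> (\<forall>x\<in>linf_space. c * linf_norm x \<le> N x \<and> N x \<le> C * linf_norm x))"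

definition SQ_less :: "'k set \<Rightarrow> (('i \<Rightarrow> real) \<Rightarrow> real) \<Rightarrow> bool" where
  "SQ_less K N \<longleftrightarrow>
     (\<forall>A. A \<subseteq> {x\<in>linf_space. N x = 1} \<and> card_less A K \<longrightarrow>
        (\<exists>y\<in>linf_space. N y = 1 \<and> (\<forall>x\<in>A. N (\<lambda>i. x i + y i) \<le> 1 \<and> N (\<lambda>i. x i - y i) \<le> 1)))"

end

theory Submission
  imports Defs
begin

lemma uf_up: assumes "is_ultrafilter U" "A \<in> U" "A \<subseteq> B" shows "B \<in> U"
proof -
  have "\<forall>A B. A \<in> U \<and> A \<subseteq> B \<longrightarrow> B \<in> U" using assms(1) unfolding is_ultrafilter_def by simp
  then show ?thesis using assms(2,3) by blast
qed

lemma uf_int: assumes "is_ultrafilter U" "A \<in> U" "B \<in> U" shows "A \<inter> B \<in> U"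
proof -
  have "\<forall>A B. A \<in> U \<and> B \<in> U \<longrightarrow> A \<inter> B \<in> U" using assms(1) unfolding is_ultrafilter_def by simp
  then show ?thesis using assms(2,3) by blast
qed

lemma uf_emp: "is_ultrafilter U \<Longrightarrow> {} \<notin> U" unfolding is_ultrafilter_def by simp
lemma uf_univ: "is_ultrafilter U \<Longrightarrow> UNIV \<in> U" unfolding is_ultrafilter_def by simp
lemma uf_cmp: "is_ultrafilter U \<Longrightarrow> A \<in> U \<or> - A \<in> U" unfolding is_ultrafilter_def by simp

lemma nat_less_uncountable:
  assumes "\<not> countable (UNIV :: 'k set)"
  shows "card_less (range (f :: nat \<Rightarrow> 'a)) (UNIV :: 'k set)"
proof -
  have n: "(card_of (UNIV :: 'k set), card_of (UNIV :: nat set)) \<notin> ordLeq"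
  proof
    assume "(card_of (UNIV :: 'k set), card_of (UNIV :: nat set)) \<in> ordLeq"
    then have "\<exists>g. inj_on g (UNIV :: 'k set) \<and> g ` UNIV \<subseteq> (UNIV :: nat set)"
      by (subst card_of_ordLeq)
    then obtain g :: "'k \<Rightarrow> nat" where "inj_on g UNIV" by blast
    then have "countable (UNIV :: 'k set)" by (rule countableI)
    with assms show False by simp
  qed
  have "(card_of (UNIV :: nat set), card_of (UNIV :: 'k set)) \<in> ordLess"
    using n not_ordLeq_iff_ordLess[OF card_of_Well_order card_of_Well_order] by blast
  moreover have "(card_of (range f), card_of (UNIV :: nat set)) \<in> ordLeq" by (rule card_of_image)
  ultimately show ?thesis unfolding card_less_def by (rule ordLeq_ordLess_trans[rotated])
qed

lemma countable_inter_U: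
  assumes "\<not> countable (UNIV :: 'k set)" "kappa_complete (UNIV :: 'k set) U"
    and "\<And>n::nat. f n \<in> U"
  shows "\<Inter>(range f) \<in> U"
proof -
  have "\<forall>F. F \<subseteq> U \<and> F \<noteq> {} \<and> card_less F (UNIV :: 'k set) \<longrightarrow> \<Inter>F \<in> U"
    using assms(2) unfolding kappa_complete_def by simp
  moreover have "range f \<subseteq> U" using assms(3) by blast
  ultimately show ?thesis using nat_less_uncountable[OF assms(1), of f] by blast
qed

lemma small_eps_zero:
  fixes a :: real
  assumes "\<And>n. \<bar>a\<bar> \<le> 1 / real (Suc n)"
  shows "a = 0"
proof (rule ccontr)
  assume "a \<noteq> 0"
  then obtain n where "inverse (real (Suc n)) < \<bar>a\<bar>" using reals_Archimedean[of "\<bar>a\<bar>"] by auto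
  with assms[of n] show False by (simp add: divide_inverse)
qed

lemma ex_lim:
  assumes cu: "\<not> countable (UNIV :: 'k set)" and kc: "kappa_complete (UNIV :: 'k set) U"
    and uf: "is_ultrafilter U" and bd: "bounded (range (x :: 'i \<Rightarrow> real))"
  shows "\<exists>c. {i. x i = c} \<in> U"
proof -
  obtain B where B: "\<And>i. \<bar>x i\<bar> \<le> B" using bd unfolding bounded_real by auto
  note up = uf_up[OF uf] and emp = uf_emp[OF uf] and univ = uf_univ[OF uf]
    and cmp = uf_cmp[OF uf] and int = uf_int[OF uf]
  define S where "S = {c. {i. c \<le> x i} \<in> U}"
  have "\<And>i. -B \<le> x i" using B by (metis abs_le_D2 minus_le_iff)
  then have "{i. -B \<le> x i} = UNIV" by auto
  then have neS: "-B \<in> S" unfolding S_def using univ by simp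
  have bS: "\<And>c. c \<in> S \<Longrightarrow> c \<le> B"
  proof (rule ccontr)
    fix c assume "c \<in> S" "\<not> c \<le> B"
    then have "{i. c \<le> x i} = {}" using B by (auto simp: abs_le_iff not_le intro: le_less_trans)
    with \<open>c \<in> S\<close> emp show False unfolding S_def by simp
  qed
  then have bdd: "bdd_above S" by (rule bdd_aboveI)
  define L where "L = Sup S"
  define f where "f n = {i. L - 1 / real (Suc n) \<le> x i} \<inter> {i. x i < L + 1 / real (Suc n)}" for n
  have "f n \<in> U" for n
  proof -
    have pos: "0 < 1 / real (Suc n)" by simp
    have "L - 1 / real (Suc n) < Sup S" using pos L_def by simp
    then obtain c where c: "c \<in> S" "L - 1 / real (Suc n) < c"
      using less_cSup_iff[OF _ bdd] neS by blast
    have "{i. c \<le> x i} \<subseteq> {i. L - 1 / real (Suc n) \<le> x i}" using c(2) by auto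
    then have a1: "{i. L - 1 / real (Suc n) \<le> x i} \<in> U"
      using up[of "{i. c \<le> x i}"] c(1) unfolding S_def by auto
    have "L + 1 / real (Suc n) \<notin> S"
    proof
      assume "L + 1 / real (Suc n) \<in> S"
      then have "L + 1 / real (Suc n) \<le> L" unfolding L_def using cSup_upper[OF _ bdd] by blast
      with pos show False by simp
    qed
    then have "- {i. L + 1 / real (Suc n) \<le> x i} \<in> U" using cmp unfolding S_def by blast
    moreover have "- {i. L + 1 / real (Suc n) \<le> x i} = {i. x i < L + 1 / real (Suc n)}" by auto
    ultimately show ?thesis using a1 int unfolding f_def by simp
  qed
  then have "\<Inter>(range f) \<in> U" using countable_inter_U[OF cu kc] by blast
  moreover have "\<Inter>(range f) \<subseteq> {i. x i = L}"
  proof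
    fix i assume "i \<in> \<Inter>(range f)"
    then have "i \<in> f n" for n by blast
    then have h: "L - 1 / real (Suc n) \<le> x i \<and> x i < L + 1 / real (Suc n)" for n unfolding f_def by blast
    have "\<bar>x i - L\<bar> \<le> 1 / real (Suc n)" for n using h[of n] unfolding abs_le_iff by linarith
    then show "i \<in> {i. x i = L}" using small_eps_zero[of "x i - L"] by simp
  qed
  ultimately show ?thesis using up by blast
qed


definition Lim :: "'i set set \<Rightarrow> ('i \<Rightarrow> real) \<Rightarrow> real" where
  "Lim U x = (THE c. {i. x i = c} \<in> U)"

lemma Lim_eq:
  assumes uf: "is_ultrafilter U" and "{i. x i = c} \<in> U"
  shows "Lim U x = c"
  unfolding Lim_def
proof (rule the_equality)
  show "{i. x i = c} \<in> U" by fact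
  fix d assume "{i. x i = d} \<in> U"
  then have "{i. x i = c} \<inter> {i. x i = d} \<in> U" using uf_int[OF uf] assms(2) by blast
  moreover have "{} \<notin> U" using uf_emp[OF uf] by blast
  ultimately have "{i. x i = c} \<inter> {i. x i = d} \<noteq> {}" by metis
  then obtain i where "x i = c" "x i = d" by blast
  then show "d = c" by simp
qed

lemma Lim_eqI:
  assumes uf: "is_ultrafilter U" and "A \<in> U" and "\<And>i. i \<in> A \<Longrightarrow> x i = c"
  shows "Lim U x = c"
proof -
  have "A \<subseteq> {i. x i = c}" using assms(3) by auto
  then have "{i. x i = c} \<in> U" using uf_up[OF uf assms(2)] by blast
  then show ?thesis using Lim_eq[OF uf] by blast
qed

lemma linf_iff: "x \<in> linf_space \<longleftrightarrow> (\<exists>B. \<forall>i. \<bar>x i\<bar> \<le> B)"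
  unfolding linf_space_def bounded_real by auto

lemma linf_upper: "x \<in> linf_space \<Longrightarrow> \<bar>x i\<bar> \<le> linf_norm x"
  unfolding linf_norm_def linf_iff
  by (auto intro!: cSUP_upper bdd_aboveI2)

lemma linf_least: "(\<And>i. \<bar>x i\<bar> \<le> B) \<Longrightarrow> linf_norm x \<le> B"
  unfolding linf_norm_def by (rule cSUP_least) auto

lemma linf_nonneg: "x \<in> linf_space \<Longrightarrow> 0 \<le> linf_norm x"
  using linf_upper[of x undefined] by linarith

lemma linf_shift: assumes "x \<in> linf_space" shows "(\<lambda>i. x i - c) \<in> linf_space"
proof -
  obtain B where B: "\<And>i. \<bar>x i\<bar> \<le> B" using assms unfolding linf_iff by blast
  have "\<bar>x i - c\<bar> \<le> B + \<bar>c\<bar>" for i using B[of i] by linarith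
  then show ?thesis unfolding linf_iff by blast
qed

lemma linf_add: assumes "x \<in> linf_space" "y \<in> linf_space" shows "(\<lambda>i. x i + y i) \<in> linf_space"
proof -
  obtain B where B: "\<And>i. \<bar>x i\<bar> \<le> B" using assms unfolding linf_iff by blast
  obtain C where C: "\<And>i. \<bar>y i\<bar> \<le> C" using assms unfolding linf_iff by blast
  have "\<bar>x i + y i\<bar> \<le> B + C" for i using B[of i] C[of i] by linarith
  then show ?thesis unfolding linf_iff by blast
qed

lemma linf_scale_mem: assumes "x \<in> linf_space" shows "(\<lambda>i. c * x i) \<in> linf_space"
proof -
  obtain B where B: "\<And>i. \<bar>x i\<bar> \<le> B" using assms unfolding linf_iff by blast
  have "\<bar>c * x i\<bar> \<le> \<bar>c\<bar> * B" for i using B[of i] by (simp add: abs_mult mult_left_mono)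
  then show ?thesis unfolding linf_iff by blast
qed

lemma linf_scale:
  assumes "x \<in> linf_space"
  shows "linf_norm (\<lambda>i. c * x i) = \<bar>c\<bar> * linf_norm x"
proof (cases "c = 0")
  case True
  have "linf_norm (\<lambda>i. c * x i) \<le> 0" by (rule linf_least) (simp add: True)
  moreover have "0 \<le> linf_norm (\<lambda>i. c * x i)" by (rule linf_nonneg[OF linf_scale_mem[OF assms]])
  ultimately show ?thesis using True by simp
next
  case False
  have cx: "(\<lambda>i. c * x i) \<in> linf_space" by (rule linf_scale_mem[OF assms])
  have "linf_norm (\<lambda>i. c * x i) \<le> \<bar>c\<bar> * linf_norm x"
    by (rule linf_least) (simp add: abs_mult linf_upper[OF assms] mult_left_mono)
  moreover have "linf_norm x \<le> linf_norm (\<lambda>i. c * x i) / \<bar>c\<bar>"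
  proof (rule linf_least)
    fix i
    have "\<bar>c\<bar> * \<bar>x i\<bar> \<le> linf_norm (\<lambda>i. c * x i)" using linf_upper[OF cx, of i] by (simp add: abs_mult)
    then show "\<bar>x i\<bar> \<le> linf_norm (\<lambda>i. c * x i) / \<bar>c\<bar>" using False by (simp add: field_simps)
  qed
  then have "\<bar>c\<bar> * linf_norm x \<le> linf_norm (\<lambda>i. c * x i)" using False by (simp add: field_simps)
  ultimately show ?thesis by simp
qed

lemma linf_triangle:
  assumes "x \<in> linf_space" "y \<in> linf_space"
  shows "linf_norm (\<lambda>i. x i + y i) \<le> linf_norm x + linf_norm y"
proof (rule linf_least)
  fix i show "\<bar>x i + y i\<bar> \<le> linf_norm x + linf_norm y"
    using linf_upper[OF assms(1), of i] linf_upper[OF assms(2), of i] by linarith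
qed

theorem proposition3p6:
  fixes U :: "'i set set"
  assumes "\<not> countable (UNIV :: 'k set)"
    and "\<not> countable (UNIV :: 'i set)"
    and "is_ultrafilter U" and "non_principal U"
    and "kappa_complete (UNIV :: 'k set) U"
  shows "\<exists>N :: ('i \<Rightarrow> real) \<Rightarrow> real. equivalent_norm N \<and> SQ_less (UNIV :: 'k set) N"
proof -
  note uf = assms(3)
  note up = uf_up[OF uf] and emp = uf_emp[OF uf] and univ = uf_univ[OF uf]
    and cmp = uf_cmp[OF uf] and int = uf_int[OF uf]
  have LS: "{i. x i = Lim U x} \<in> U" if "x \<in> linf_space" for x
  proof -
    have "bounded (range x)" using that unfolding linf_space_def by simp
    then obtain c where c: "{i. x i = c} \<in> U"
      using ex_lim[OF assms(1) assms(5) uf] by blast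
    then show ?thesis using Lim_eq[OF uf c] by simp
  qed
  have Lpt: "\<exists>i. x i = Lim U x" if "x \<in> linf_space" for x
  proof -
    have "{i. x i = Lim U x} \<noteq> {}" using LS[OF that] emp by force
    then show ?thesis by blast
  qed
  have Lb: "\<bar>Lim U x\<bar> \<le> linf_norm x" if xl: "x \<in> linf_space" for x
  proof -
    obtain i where "x i = Lim U x" using Lpt[OF xl] by blast
    then show ?thesis using linf_upper[OF xl, of i] by simp
  qed
  have Lscale: "Lim U (\<lambda>i. c * x i) = c * Lim U x" if "x \<in> linf_space" for x c
    by (rule Lim_eqI[OF uf LS[OF that]]) simp
  have Ladd: "Lim U (\<lambda>i. x i + y i) = Lim U x + Lim U y" if "x \<in> linf_space" "y \<in> linf_space" for x y
    by (rule Lim_eqI[OF uf int[OF LS[OF that(1)] LS[OF that(2)]]]) simp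
  define N where "N x = max \<bar>Lim U x\<bar> (linf_norm (\<lambda>i. x i - Lim U x))" for x :: "'i \<Rightarrow> real"
  have Nge1: "\<bar>Lim U x\<bar> \<le> N x" and Nge2: "linf_norm (\<lambda>i. x i - Lim U x) \<le> N x" for x
    unfolding N_def by auto
  have Nle: "N x \<le> B" if "\<bar>Lim U x\<bar> \<le> B" "\<And>i. \<bar>x i - Lim U x\<bar> \<le> B" for x B
    unfolding N_def using that linf_least[of "\<lambda>i. x i - Lim U x" B] by simp
  have Nup: "\<bar>x i - Lim U x\<bar> \<le> N x" if "x \<in> linf_space" for x i
    using linf_upper[OF linf_shift[OF that, of "Lim U x"], of i] Nge2[of x] by linarith
  have eq: "equivalent_norm N"
    unfolding equivalent_norm_def
  proof (intro conjI ballI allI)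
    fix x :: "'i \<Rightarrow> real" assume x: "x \<in> linf_space"
    show "0 \<le> N x" using Nge1[of x] by linarith
    show "N x = 0 \<longleftrightarrow> (\<forall>i. x i = 0)"
    proof
      assume "N x = 0"
      then have "Lim U x = 0" using Nge1[of x] by linarith
      then show "\<forall>i. x i = 0" using Nup[OF x] \<open>N x = 0\<close> by (metis abs_le_zero_iff diff_zero)
    next
      assume "\<forall>i. x i = 0"
      then have x0: "x = (\<lambda>i. 0)" by auto
      have "Lim U x = 0" by (rule Lim_eqI[OF uf univ]) (simp add: x0)
      then show "N x = 0" using Nle[of x 0] Nge1[of x] x0 by simp
    qed
  next
    fix x :: "'i \<Rightarrow> real" and c :: real assume x: "x \<in> linf_space"
    have "(\<lambda>i. c * x i - Lim U (\<lambda>i. c * x i)) = (\<lambda>i. c * (x i - Lim U x))"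
      using Lscale[OF x] by (simp add: algebra_simps)
    then have "N (\<lambda>i. c * x i) = max (\<bar>c\<bar> * \<bar>Lim U x\<bar>) (\<bar>c\<bar> * linf_norm (\<lambda>i. x i - Lim U x))"
      unfolding N_def using Lscale[OF x] linf_scale[OF linf_shift[OF x]] by (simp add: abs_mult)
    also have "\<dots> = \<bar>c\<bar> * N x" unfolding N_def by (simp add: max_mult_distrib_left)
    finally show "N (\<lambda>i. c * x i) = \<bar>c\<bar> * N x" .
  next
    fix x y :: "'i \<Rightarrow> real" assume x: "x \<in> linf_space" and y: "y \<in> linf_space"
    show "N (\<lambda>i. x i + y i) \<le> N x + N y"
    proof (rule Nle)
      show "\<bar>Lim U (\<lambda>i. x i + y i)\<bar> \<le> N x + N y"
        using Ladd[OF x y] Nge1[of x] Nge1[of y] by linarith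
      fix i show "\<bar>x i + y i - Lim U (\<lambda>i. x i + y i)\<bar> \<le> N x + N y"
        using Ladd[OF x y] Nup[OF x, of i] Nup[OF y, of i] by linarith
    qed
  next
    show "\<exists>c C. 0 < c \<and> (\<forall>x\<in>linf_space. c * linf_norm x \<le> N x \<and> N x \<le> C * linf_norm x)"
    proof (intro exI conjI ballI)
      show "(0::real) < 1/2" by simp
      fix x :: "'i \<Rightarrow> real" assume x: "x \<in> linf_space"
      have "linf_norm x \<le> 2 * N x"
      proof (rule linf_least)
        fix i show "\<bar>x i\<bar> \<le> 2 * N x" using Nup[OF x, of i] Nge1[of x] by linarith
      qed
      then show "1/2 * linf_norm x \<le> N x" by simp
      show "N x \<le> 2 * linf_norm x"
      proof (rule Nle)
        show "\<bar>Lim U x\<bar> \<le> 2 * linf_norm x" using Lb[OF x] linf_nonneg[OF x] by linarith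
        fix i show "\<bar>x i - Lim U x\<bar> \<le> 2 * linf_norm x"
          using Lb[OF x] linf_upper[OF x, of i] by linarith
      qed
    qed
  qed
  have sq: "SQ_less (UNIV :: 'k set) N"
    unfolding SQ_less_def
  proof (intro allI impI)
    fix A :: "('i \<Rightarrow> real) set"
    assume "A \<subseteq> {x \<in> linf_space. N x = 1} \<and> card_less A (UNIV :: 'k set)"
    then have A: "A \<subseteq> {x \<in> linf_space. N x = 1}" and cA: "card_less A (UNIV :: 'k set)" by auto
    define W where "W = (if A = {} then UNIV else \<Inter>((\<lambda>x. {i. x i = Lim U x}) ` A))"
    have "W \<in> U"
    proof (cases "A = {}")
      case True then show ?thesis using univ W_def by simp
    next
      case False
      have "(card_of ((\<lambda>x. {i. x i = Lim U x}) ` A), card_of A) \<in> ordLeq" by (rule card_of_image)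
      then have "card_less ((\<lambda>x. {i. x i = Lim U x}) ` A) (UNIV :: 'k set)"
        using cA unfolding card_less_def using ordLeq_ordLess_trans by blast
      moreover have "(\<lambda>x. {i. x i = Lim U x}) ` A \<subseteq> U" using A LS by auto
      moreover have "\<forall>F. F \<subseteq> U \<and> F \<noteq> {} \<and> card_less F (UNIV :: 'k set) \<longrightarrow> \<Inter>F \<in> U"
        using assms(5) unfolding kappa_complete_def by simp
      moreover have "(\<lambda>x. {i. x i = Lim U x}) ` A \<noteq> {}" using False by simp
      ultimately have "\<Inter>((\<lambda>x. {i. x i = Lim U x}) ` A) \<in> U" by blast
      then show ?thesis using False unfolding W_def by simp
    qed
    then obtain i0 where i0: "i0 \<in> W" using emp by (metis equals0I)
    define y where "y i = (if i = i0 then 1 else (0::real))" for i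
    have yl: "y \<in> linf_space" unfolding linf_iff y_def by (rule exI[of _ 1]) simp
    have "{i0} \<notin> U" using assms(4) unfolding non_principal_def by blast
    then have "- {i0} \<in> U" using cmp by blast
    then have Ly: "Lim U y = 0" by (rule Lim_eqI[OF uf]) (simp add: y_def)
    have xi0: "x i0 = Lim U x" if "x \<in> A" for x
      using i0 that unfolding W_def by (auto split: if_splits)
    have "N y = 1"
    proof (rule antisym)
      show "N y \<le> 1" by (rule Nle) (auto simp: Ly y_def)
      show "1 \<le> N y" using Nup[OF yl, of i0] by (simp add: Ly y_def)
    qed
    moreover have "N (\<lambda>i. x i + y i) \<le> 1 \<and> N (\<lambda>i. x i - y i) \<le> 1" if xA: "x \<in> A" for x
    proof -
      have x: "x \<in> linf_space" and Nx: "N x = 1" using A xA by auto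
      have L1: "Lim U (\<lambda>i. x i + y i) = Lim U x" using Ladd[OF x yl] Ly by simp
      have "Lim U (\<lambda>i. (-1) * y i) = 0" using Lscale[OF yl, of "-1"] Ly by simp
      then have L2: "Lim U (\<lambda>i. x i - y i) = Lim U x"
        using Ladd[OF x linf_scale_mem[OF yl, of "-1"]] by simp
      have b: "\<bar>x i - Lim U x\<bar> \<le> 1" for i using Nup[OF x, of i] Nx by simp
      have "N (\<lambda>i. x i + y i) \<le> 1"
      proof (rule Nle)
        show "\<bar>Lim U (\<lambda>i. x i + y i)\<bar> \<le> 1" using L1 Nge1[of x] Nx by simp
        fix i show "\<bar>x i + y i - Lim U (\<lambda>i. x i + y i)\<bar> \<le> 1"
          using L1 b[of i] xi0[OF xA] by (simp add: y_def)
      qed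
      moreover have "N (\<lambda>i. x i - y i) \<le> 1"
      proof (rule Nle)
        show "\<bar>Lim U (\<lambda>i. x i - y i)\<bar> \<le> 1" using L2 Nge1[of x] Nx by simp
        fix i show "\<bar>x i - y i - Lim U (\<lambda>i. x i - y i)\<bar> \<le> 1"
          using L2 b[of i] xi0[OF xA] by (simp add: y_def)
      qed
      ultimately show ?thesis by simp
    qed
    ultimately show "\<exists>y\<in>linf_space. N y = 1 \<and> (\<forall>x\<in>A. N (\<lambda>i. x i + y i) \<le> 1 \<and> N (\<lambda>i. x i - y i) \<le> 1)"
      using yl by blast
  qed
  show ?thesis using eq sq by blast
qed

end
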